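(* Let $g\ge2$, $d\ge2$, let $\sigma$ be a conjugacy class of $S_d$ of cycle type $(l_1)\cdots(l_m)$ with $\sum l_i=d$ and $\sum(l_i-1)=2g-2$, and let $(1^{a_1}2^{a_2}\cdots d^{a_d})$ be any cycle type of $S_d$. Then there is no pair $(\alpha,\beta)\in S_d\times S_d$ such that $\alpha\beta\alpha^{-1}\beta^{-1}\in\sigma$, $\langle\alpha,\beta\rangle$ is transitive, $\beta$ has cycle type $(1^{a_1}2^{a_2}\cdots d^{a_d})$, and both $\alpha$ and $\beta$ commute with the $d$-cycle $(12\cdots d)$.
   Context: $(1^{a_1}2^{a_2}\cdots d^{a_d})$ denotes the conjugacy class of permutations with $a_i$ cycles of length $i$, $\sum ia_i=d$. *)

theory Defs
  imports "HOL-Combinatorics.Orbits" "HOL-Combinatorics.Cycles" "HOL-Combinatorics.Permutations"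
    "HOL-Library.Multiset"
begin

definition cycle_type :: "nat \<Rightarrow> (nat \<Rightarrow> nat) \<Rightarrow> nat multiset" where
  "cycle_type d p = image_mset card (mset_set ((\<lambda>x. orbit p x) ` {1..d}))"

inductive_set gen_group :: "(nat \<Rightarrow> nat) \<Rightarrow> (nat \<Rightarrow> nat) \<Rightarrow> (nat \<Rightarrow> nat) set"
  for a b where
  gen_id: "id \<in> gen_group a b"
| gen_a: "g \<in> gen_group a b \<Longrightarrow> a \<circ> g \<in> gen_group a b"
| gen_b: "g \<in> gen_group a b \<Longrightarrow> b \<circ> g \<in> gen_group a b"
| gen_ai: "g \<in> gen_group a b \<Longrightarrow> inv a \<circ> g \<in> gen_group a b"
| gen_bi: "g \<in> gen_group a b \<Longrightarrow> inv b \<circ> g \<in> gen_group a b"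

definition transitive_on :: "nat \<Rightarrow> (nat \<Rightarrow> nat) \<Rightarrow> (nat \<Rightarrow> nat) \<Rightarrow> bool" where
  "transitive_on d a b \<longleftrightarrow> (\<forall>i\<in>{1..d}. \<forall>j\<in>{1..d}. \<exists>g\<in>gen_group a b. g i = j)"

definition dcycle :: "nat \<Rightarrow> nat \<Rightarrow> nat" where
  "dcycle d = cycle_of_list [1..<d+1]"

end

theory Submission
  imports Defs
begin

lemma orbit_id: "orbit id x = {x}"
  using orbit_eq_singleton_iff[of id x] by simp

lemma dpow1:
  assumes "j < d"
  shows "(dcycle d ^^ j) 1 = j + 1"
proof -
  let ?L = "[1..<d+1]"
  have "map (dcycle d ^^ j) ?L = rotate j ?L"
    unfolding dcycle_def by (rule cyclic_rotation) simp
  hence "map (dcycle d ^^ j) ?L ! 0 = rotate j ?L ! 0" by simp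
  moreover have "d > 0" using assms by simp
  moreover have "map (dcycle d ^^ j) ?L ! 0 = (dcycle d ^^ j) 1"
    using \<open>d > 0\<close> by (simp only: nth_map length_upt nth_upt) simp
  moreover have "rotate j ?L ! 0 = j + 1"
    using \<open>d > 0\<close> assms by (simp del: upt_Suc add: nth_rotate)
  ultimately show ?thesis by simp
qed

lemma comm_pow:
  assumes "f \<circ> c = c \<circ> f"
  shows "f ((c ^^ j) x) = (c ^^ j) (f x)"
proof (induction j arbitrary: x)
  case 0 then show ?case by simp
next
  case (Suc j)
  have "f ((c ^^ Suc j) x) = f (c ((c ^^ j) x))" by simp
  also have "\<dots> = c (f ((c ^^ j) x))" using assms by (metis comp_apply)
  also have "\<dots> = (c ^^ Suc j) (f x)" using Suc by simp
  finally show ?case .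
qed

lemma elem_pow:
  assumes "x \<in> {1..d}"
  shows "x = (dcycle d ^^ (x - 1)) 1"
  using dpow1[of "x - 1" d] assms by auto

lemma commute_on:
  assumes a: "\<alpha> permutes {1..d}" and b: "\<beta> permutes {1..d}"
    and ca: "\<alpha> \<circ> dcycle d = dcycle d \<circ> \<alpha>" and cb: "\<beta> \<circ> dcycle d = dcycle d \<circ> \<beta>"
  shows "\<alpha> \<circ> \<beta> = \<beta> \<circ> \<alpha>"
proof
  fix x
  let ?c = "dcycle d"
  show "(\<alpha> \<circ> \<beta>) x = (\<beta> \<circ> \<alpha>) x"
  proof (cases "x \<in> {1..d}")
    case False
    then show ?thesis using a b by (simp add: permutes_not_in)
  next
    case True
    have a1: "\<alpha> 1 \<in> {1..d}" using a True permutes_in_image by fastforce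
    have b1: "\<beta> 1 \<in> {1..d}" using b True permutes_in_image by fastforce
    define k where "k = \<alpha> 1 - 1"
    define m where "m = \<beta> 1 - 1"
    have ak: "\<alpha> 1 = (?c ^^ k) 1" using elem_pow[OF a1] k_def by simp
    have bm: "\<beta> 1 = (?c ^^ m) 1" using elem_pow[OF b1] m_def by simp
    have ab1: "\<alpha> (\<beta> 1) = (?c ^^ (m + k)) 1"
      using comm_pow[OF ca, of m 1] ak bm by (simp add: funpow_add)
    have ba1: "\<beta> (\<alpha> 1) = (?c ^^ (k + m)) 1"
      using comm_pow[OF cb, of k 1] ak bm by (simp add: funpow_add)
    have ex: "x = (?c ^^ (x - 1)) 1" using elem_pow[OF True] .
    have "\<alpha> (\<beta> x) = (?c ^^ (x - 1)) (\<alpha> (\<beta> 1))"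
      using ex comm_pow[OF ca] comm_pow[OF cb] by metis
    moreover have "\<beta> (\<alpha> x) = (?c ^^ (x - 1)) (\<beta> (\<alpha> 1))"
      using ex comm_pow[OF ca] comm_pow[OF cb] by metis
    ultimately show ?thesis using ab1 ba1 by (simp add: add.commute)
  qed
qed

theorem mainTheorem11:
  fixes g d :: nat and ls :: "nat multiset" and a :: "nat \<Rightarrow> nat"
  assumes "g \<ge> 2" and "d \<ge> 2"
    and "\<forall>l\<in>#ls. l \<ge> 1"
    and "sum_mset ls = d"
    and "sum_mset (image_mset (\<lambda>l. l - 1) ls) = 2 * g - 2"
    and "(\<Sum>i=1..d. i * a i) = d"
  shows "\<not> (\<exists>\<alpha> \<beta>. \<alpha> permutes {1..d} \<and> \<beta> permutes {1..d}
              \<and> cycle_type d (\<alpha> \<circ> \<beta> \<circ> inv \<alpha> \<circ> inv \<beta>) = ls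
              \<and> transitive_on d \<alpha> \<beta>
              \<and> (\<forall>i\<in>{1..d}. count (cycle_type d \<beta>) i = a i)
              \<and> \<alpha> \<circ> dcycle d = dcycle d \<circ> \<alpha>
              \<and> \<beta> \<circ> dcycle d = dcycle d \<circ> \<beta>)"
proof
  assume "\<exists>\<alpha> \<beta>. \<alpha> permutes {1..d} \<and> \<beta> permutes {1..d}
              \<and> cycle_type d (\<alpha> \<circ> \<beta> \<circ> inv \<alpha> \<circ> inv \<beta>) = ls
              \<and> transitive_on d \<alpha> \<beta>
              \<and> (\<forall>i\<in>{1..d}. count (cycle_type d \<beta>) i = a i)
              \<and> \<alpha> \<circ> dcycle d = dcycle d \<circ> \<alpha>
              \<and> \<beta> \<circ> dcycle d = dcycle d \<circ> \<beta>"
  then obtain \<alpha> \<beta> where pa: "\<alpha> permutes {1..d}" and pb: "\<beta> permutes {1..d}"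
    and ct: "cycle_type d (\<alpha> \<circ> \<beta> \<circ> inv \<alpha> \<circ> inv \<beta>) = ls"
    and ca: "\<alpha> \<circ> dcycle d = dcycle d \<circ> \<alpha>" and cb: "\<beta> \<circ> dcycle d = dcycle d \<circ> \<beta>"
    by blast
  have c: "\<alpha> \<circ> \<beta> = \<beta> \<circ> \<alpha>" by (rule commute_on[OF pa pb ca cb])
  have ia: "\<alpha> \<circ> inv \<alpha> = id" using permutes_surj[OF pa] by (simp add: surj_iff)
  have ib: "\<beta> \<circ> inv \<beta> = id" using permutes_surj[OF pb] by (simp add: surj_iff)
  have "\<alpha> \<circ> \<beta> \<circ> inv \<alpha> \<circ> inv \<beta> = \<beta> \<circ> (\<alpha> \<circ> inv \<alpha>) \<circ> inv \<beta>"
    using c by (simp add: comp_assoc)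
  also have "\<dots> = id" using ia ib by simp
  finally have "cycle_type d id = ls" using ct by simp
  hence all1: "\<forall>l\<in>#ls. l = 1"
    unfolding cycle_type_def by (auto simp: orbit_id)
  have "sum_mset (image_mset (\<lambda>l. l - 1) ls) = 0" using all1 by (induction ls) auto
  thus False using assms(1,5) by linarith
qed

end
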